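(* Let $m\ge4$ and let $\pi$ be the permutation of $\mathbb{F}_{2^m}$ given by $\pi(x)=x^{2^m-2}$. Then for all $(a_1,a_2),(b_1,b_2)\in\mathbb{F}_{2^m}\times\mathbb{F}_{2^m}$, the identities \[\pi(x)+\pi(x+a_2)+\pi(x+b_2)+\pi(x+a_2+b_2)=0,\qquad {\rm Tr}_1^m\bigl(a_1\pi(x+a_2)+b_1\pi(x+b_2)+(a_1+b_1)\pi(x+a_2+b_2)\bigr)=0\] hold for all $x\in\mathbb{F}_{2^m}$ if and only if one of the following holds: $(a_1,a_2)=(0,0)$, $(b_1,b_2)=(0,0)$, $(a_1,a_2)=(b_1,b_2)$, or $a_2=b_2=0$.
   Context: ${\rm Tr}_1^m$ denotes the absolute trace from $\mathbb{F}_{2^m}$ to $\mathbb{F}_2$. *)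

theory Defs
  imports Main
begin

text \<open>Absolute trace Tr_1^m from F_{2^m} to F_2 (value lies in the prime subfield {0,1}).\<close>
definition abs_trace :: "nat \<Rightarrow> 'a::field \<Rightarrow> 'a" where
  "abs_trace m x = (\<Sum>i<m. x ^ (2 ^ i))"

definition inv_perm :: "nat \<Rightarrow> 'a::field \<Rightarrow> 'a" where
  "inv_perm m x = x ^ (2 ^ m - 2)"

end

theory Submission
  imports Defs "HOL-Number_Theory.Residues" "HOL-Computational_Algebra.Polynomial"
begin

lemma char2:
  assumes "card (UNIV :: 'a::{field,finite} set) = 2 ^ m" "m \<ge> 1"
  shows "(2::'a) = 0"
proof -
  have pos: "CHAR('a) > 0" by (simp add: finite_imp_CHAR_pos)
  have pr: "prime CHAR('a)" using prime_CHAR_semidom[OF pos] .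
  have "CHAR('a) dvd 2 ^ m" using CHAR_dvd_CARD[where 'a='a] assms(1) by simp
  hence "CHAR('a) dvd 2" using pr prime_dvd_power by blast
  hence "CHAR('a) = 2" using pr dvd_imp_le[of "CHAR('a)" 2] prime_gt_1_nat[OF pr]
    by simp
  hence "of_nat 2 = (0::'a)" using of_nat_CHAR[where 'a='a] by simp
  thus ?thesis by simp
qed

lemma pow_card_same:
  fixes x :: "'a :: {field,finite}"
  shows   "x ^ card (UNIV :: 'a set) = x"
proof (cases "x = 0")
  case False
  have "x * (\<Prod>y\<in>UNIV-{0}. x * y) = x * x ^ (card (UNIV :: 'a set) - 1) * \<Prod>(UNIV-{0})"
    by (simp add: prod.distrib mult_ac)
  also have "x * x ^ (card (UNIV :: 'a set) - 1) = x ^ Suc (card (UNIV :: 'a set) - 1)"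
    by (subst power_Suc) auto
  also have "Suc (card (UNIV :: 'a set) - 1) = card (UNIV :: 'a set)"
    using finite_UNIV_card_ge_0[where ?'a = 'a] by simp
  also have "(\<Prod>y\<in>UNIV-{0}. x * y) = (\<Prod>y\<in>UNIV-{0}. y)"
    by (rule prod.reindex_bij_witness[of _ "\<lambda>y. y / x" "\<lambda>y. x * y"]) (use False in auto)
  finally show ?thesis
    by simp
qed (use finite_UNIV_card_ge_0[where ?'a = 'a] in auto)

lemma pow_qm1:
  fixes x :: "'a :: {field,finite}"
  assumes "card (UNIV :: 'a set) = 2 ^ m" "m \<ge> 1" "x \<noteq> 0"
  shows "x ^ (2^m - 1) = 1"
proof -
  obtain k where k: "(2::nat)^m = Suc k" by (metis not0_implies_Suc power_not_zero zero_neq_numeral)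
  have "x * x ^ k = x" using pow_card_same[of x] assms k by simp
  hence "x ^ k = 1" using assms(3) by (metis mult_cancel_left1)
  thus ?thesis using k by simp
qed

lemma inv_perm_eq:
  fixes x :: "'a :: {field,finite}"
  assumes "card (UNIV :: 'a set) = 2 ^ m" "m \<ge> 2"
  shows "inv_perm m x = inverse x"
proof (cases "x = 0")
  case True
  have "2^m \<ge> (4::nat)" using power_increasing[OF assms(2), of "2::nat"] by simp
  then show ?thesis using True by (simp add: inv_perm_def)
next
  case False
  have "2^m \<ge> (4::nat)" using power_increasing[OF assms(2), of "2::nat"] by simp
  hence "x ^ (2^m - 2) * x = x ^ (2^m - 1)"
    by (metis Suc_diff_Suc diff_Suc_1 numeral_2_eq_2 power_Suc2 Suc_le_lessD le_trans  numeral_le_iff semiring_norm(69) Suc_1 less_le_trans one_less_numeral_iff semiring_norm(76))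
  also have "\<dots> = 1" using pow_qm1[OF assms(1) _ False] assms(2) by auto
  finally show ?thesis using False by (simp add: inv_perm_def field_simps)
qed

lemma add_self: "(2::'a::field) = 0 \<Longrightarrow> (x::'a) + x = 0"
  by (metis mult_2 mult_zero_left)

lemma add_self2: "(2::'a::field) = 0 \<Longrightarrow> (x::'a) + (x + y) = y"
  by (metis add.assoc add_self add_0)

lemma frob: "(2::'a::field) = 0 \<Longrightarrow> ((x::'a) + y) ^ 2 = x^2 + y^2"
  by (simp add: power2_sum)

lemma frob_sum: "(2::'a::field) = 0 \<Longrightarrow> (\<Sum>i\<in>A. f i :: 'a) ^ 2 = (\<Sum>i\<in>A. f i ^ 2)"
  by (induct A rule: infinite_finite_induct) (simp_all add: frob)

lemma frob_pow: "(2::'a::field) = 0 \<Longrightarrow> ((x::'a) + y) ^ (2^i) = x^(2^i) + y^(2^i)"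
proof (induct i)
  case (Suc i)
  have "(x + y) ^ (2^Suc i) = ((x+y)^(2^i))^2" by (simp add: power_mult[symmetric] mult.commute)
  also have "\<dots> = (x^(2^i))^2 + (y^(2^i))^2" using Suc by (simp add: frob)
  finally show ?case by (simp add: power_mult[symmetric] mult.commute)
qed simp

lemma trace_add: "(2::'a::field) = 0 \<Longrightarrow> abs_trace m ((x::'a) + y) = abs_trace m x + abs_trace m y"
  by (simp add: abs_trace_def frob_pow sum.distrib)

lemma trace_zero: "abs_trace m (0::'a::field) = 0"
  by (simp add: abs_trace_def power_0_left)

lemma trace_sq_gen:
  assumes two: "(2::'a::field) = 0" and xq: "(x::'a) ^ (2^m) = x"
  shows "abs_trace m x ^ 2 = abs_trace m x" "abs_trace m (x^2) = abs_trace m x"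
proof -
  have a: "abs_trace m x ^ 2 = (\<Sum>i<m. x^(2^Suc i))"
    unfolding abs_trace_def frob_sum[OF two]
    by (simp add: power_mult[symmetric] mult.commute)
  have "(\<Sum>i<Suc m. x^(2^i)) = x^(2^0) + (\<Sum>i<m. x^(2^Suc i))"
    by (rule sum.lessThan_Suc_shift)
  moreover have "(\<Sum>i<Suc m. x^(2^i)) = (\<Sum>i<m. x^(2^i)) + x^(2^m)"
    by simp
  ultimately have b: "(\<Sum>i<m. x^(2^Suc i)) = abs_trace m x"
    using xq by (simp add: abs_trace_def add.commute)
  show "abs_trace m x ^ 2 = abs_trace m x" using a b by simp
  have "abs_trace m (x^2) = (\<Sum>i<m. x^(2^Suc i))"
    unfolding abs_trace_def by (simp add: power_mult[symmetric] mult.commute)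
  then show "abs_trace m (x^2) = abs_trace m x" using b by simp
qed

lemma trace01:
  assumes two: "(2::'a::field) = 0" and xq: "(x::'a) ^ (2^m) = x"
  shows "abs_trace m x = 0 \<or> abs_trace m x = 1"
proof -
  have "abs_trace m x * (abs_trace m x - 1) = 0"
    using trace_sq_gen(1)[OF two xq] by (simp add: algebra_simps power2_eq_square)
  thus ?thesis by auto
qed

lemma trace_as:
  assumes two: "(2::'a::field) = 0" and xq: "(x::'a) ^ (2^m) = x"
  shows "abs_trace m (x^2 + x) = 0"
  using trace_add[OF two] trace_sq_gen(2)[OF two xq] add_self[OF two] by simp

lemma xq_all:
  assumes "card (UNIV :: 'a::{field,finite} set) = 2 ^ m"
  shows "(x::'a) ^ (2^m) = x"
  using pow_card_same[of x] assms by simp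

lemma card_Z:
  assumes card: "card (UNIV :: 'a::{field,finite} set) = 2 ^ m" and m: "m \<ge> 1"
  shows "card {u::'a. abs_trace m u = 0} \<le> 2^(m-1)"
proof -
  define p :: "'a poly" where "p = (\<Sum>i<m. monom 1 (2^i))"
  have pe: "poly p u = abs_trace m u" for u
    by (simp add: p_def poly_sum poly_monom abs_trace_def)
  have c: "coeff p k = (\<Sum>i<m. if 2^i = k then 1 else 0)" for k
    by (simp add: p_def coeff_sum)
  have "coeff p (2^(m-1)) = (\<Sum>i<m. if i = m-1 then 1 else 0)"
    unfolding c by (intro sum.cong) (auto simp: power_inject_exp)
  also have "\<dots> = 1" using m by simp
  finally have "p \<noteq> 0" by auto
  moreover have "degree p \<le> 2^(m-1)"
  proof (rule degree_le, intro allI impI)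
    fix k :: nat assume k: "2^(m-1) < k"
    have "(2::nat)^i \<noteq> k" if "i < m" for i
    proof -
      have "(2::nat)^i \<le> 2^(m-1)" using that by (intro power_increasing) auto
      thus ?thesis using k by auto
    qed
    thus "coeff p k = 0" unfolding c by (intro sum.neutral) auto
  qed
  ultimately show ?thesis using card_poly_roots_bound[of p] pe by simp
qed

lemma card_S:
  assumes two: "(2::'a::{field,finite}) = 0"
  shows "card (UNIV :: 'a set) \<le> 2 * card (range (\<lambda>t::'a. t^2+t))"
proof -
  define S where "S = range (\<lambda>t::'a. t^2+t)"
  have U: "UNIV = (\<Union>s\<in>S. {t. t^2+t = s})" unfolding S_def by auto
  have fib: "card {t::'a. t^2+t = s} \<le> 2" if "s \<in> S" for s
  proof -
    obtain t0 where t0: "s = t0^2+t0" using \<open>s \<in> S\<close> unfolding S_def by auto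
    have "{t::'a. t^2+t = s} \<subseteq> {t0, t0+1}"
    proof
      fix t assume "t \<in> {t::'a. t^2+t = s}"
      hence ts: "t^2+t = s" by simp
      have "(t+t0)*(t+t0+1) = (t^2+t) + (t0^2+t0) + 2*(t*t0)"
        by (simp add: algebra_simps power2_eq_square)
      also have "\<dots> = 0" using ts t0 two add_self[OF two] by simp
      finally have "t + t0 = 0 \<or> t + t0 + 1 = 0" by simp
      moreover have "t = t0" if "t + t0 = 0"
        using that add_self[OF two, of t0] by (metis add_right_cancel)
      moreover have "t = t0 + 1" if "t + t0 + 1 = 0"
        using that add_self[OF two, of "t0+1"] by (metis add.assoc add_right_cancel)
      ultimately show "t \<in> {t0, t0+1}" by auto
    qed
    hence "card {t::'a. t^2+t = s} \<le> card {t0, t0+1}" by (intro card_mono) auto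
    also have "\<dots> \<le> 2" by (simp add: card_insert_if)
    finally show ?thesis .
  qed
  have "card (UNIV :: 'a set) \<le> (\<Sum>s\<in>S. card {t::'a. t^2+t = s})"
    by (subst U) (rule card_UN_le, simp)
  also have "\<dots> \<le> card S * 2" using fib sum_bounded_above[of S "\<lambda>s. card {t::'a. t^2+t = s}" 2] by simp
  finally show ?thesis unfolding S_def by simp
qed

lemma S_eq_Z:
  assumes card: "card (UNIV :: 'a::{field,finite} set) = 2 ^ m" and m: "m \<ge> 1"
  shows "range (\<lambda>t::'a. t^2+t) = {u::'a. abs_trace m u = 0}"
proof (rule card_seteq)
  have two: "(2::'a) = 0" using char2 card m .
  show "range (\<lambda>t::'a. t^2+t) \<subseteq> {u::'a. abs_trace m u = 0}"
    using trace_as[OF two xq_all[OF card]] by auto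
  have "(2::nat)^m = 2 * 2^(m-1)" using m by (metis Suc_diff_1 less_le_trans power_Suc zero_less_one)
  then show "card {u::'a. abs_trace m u = 0} \<le> card (range (\<lambda>t::'a. t^2+t))"
    using card_Z[OF card m] card_S[OF two] card by linarith
qed simp

lemma pow_facts:
  assumes m: "m \<ge> 3" and i: "i < m"
  shows "(1::nat) \<le> 2^i" "(2::nat)^i \<le> 2^(m-1)" "(2::nat)^m = 2 * 2^(m-1)" "(4::nat) \<le> 2^(m-1)"
proof -
  show "(1::nat) \<le> 2^i" by simp
  show "(2::nat)^i \<le> 2^(m-1)" using i by (intro power_increasing) auto
  show "(2::nat)^m = 2 * 2^(m-1)" using m by (metis Suc_diff_1 less_le_trans power_Suc zero_less_one zero_less_numeral)
  have "(2::nat)^2 \<le> 2^(m-1)" using m by (intro power_increasing) auto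
  then show "(4::nat) \<le> 2^(m-1)" by simp
qed

lemma powinv:
  fixes u :: "'a::{field,finite}"
  assumes card: "card (UNIV :: 'a set) = 2 ^ m" and m: "m \<ge> 3" and i: "i < m"
  shows "u ^ (2^m - 1 - 2^i) = (inverse u) ^ (2^i)"
proof (cases "u = 0")
  case True
  have "2^m - 1 - 2^i > (0::nat)" using pow_facts[OF m i] by linarith
  then show ?thesis using True by (simp add: power_0_left)
next
  case False
  have "u ^ (2^m - 1 - 2^i) * u ^ (2^i) = u ^ (2^m - 1 - 2^i + 2^i)" by (simp add: power_add)
  also have "2^m - 1 - 2^i + 2^i = (2::nat)^m - 1" using pow_facts[OF m i] by linarith
  also have "u ^ (2^m - 1) = 1" using pow_qm1[OF card _ False] m by simp
  finally have "u ^ (2^m - 1 - 2^i) = inverse (u ^ (2^i))" using False by (simp add: field_simps)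
  then show ?thesis by (simp add: power_inverse)
qed

lemma key:
  fixes b c :: "'a::{field,finite}"
  assumes card: "card (UNIV :: 'a set) = 2 ^ m" and m: "m \<ge> 3" and b: "b \<noteq> 0"
    and H: "\<forall>x. abs_trace m (c * (inverse x + inverse (x + b))) = 0"
  shows "c = 0"
proof (rule ccontr)
  assume c: "c \<noteq> 0"
  have m1: "m \<ge> 1" using m by simp
  have two: "(2::'a) = 0" using char2 card m1 .
  note xq = xq_all[OF card]
  define d where "d = c / b"
  have d: "d \<noteq> 0" using b c by (simp add: d_def)
  define Z where "Z = {u::'a. abs_trace m u = 0}"
  have stepA: "abs_trace m (d / u) = 0" if "u \<in> Z" for u
  proof (cases "u = 0")
    case True then show ?thesis by (simp add: trace_zero)
  next
    case False
    obtain t where t: "u = t^2 + t" using \<open>u \<in> Z\<close> S_eq_Z[OF card m1] unfolding Z_def by blast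
    have t0: "t \<noteq> 0" using False t by auto
    have "u = t * (t + 1)" using t by (simp add: power2_eq_square algebra_simps)
    then have t1: "t + 1 \<noteq> 0" using False by auto
    have bt: "b*t \<noteq> 0" "b*t + b \<noteq> 0" using b t0 t1 by (auto simp: algebra_simps) (metis distrib_left mult_eq_0_iff mult.right_neutral)
    have e1: "inverse (b*t) + inverse (b*t+b) = ((b*t+b) + b*t) / ((b*t)*(b*t+b))"
      using bt by (simp add: field_simps)
    have e2: "(b*t+b) + b*t = b" using add_self[OF two, of "b*t"] by (simp add: algebra_simps)
    have e4: "(b*t)*(b*t+b) = b*(b*u)" by (simp add: t algebra_simps power2_eq_square)
    have e3: "b / ((b*t)*(b*t+b)) = inverse (b * u)"
      unfolding e4 using b False by (simp add: field_simps)
    have "c * (inverse (b*t) + inverse (b*t+b)) = d / u"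
      unfolding e1 e2 e3 d_def by (simp add: field_simps)
    then show ?thesis using H[rule_format, of "b*t"] by simp
  qed
  define Zs where "Zs = Z - {0}"
  have im: "(\<lambda>u. d / u) ` Zs = Zs"
  proof (rule endo_inj_surj)
    show "(\<lambda>u. d / u) ` Zs \<subseteq> Zs" using stepA d unfolding Zs_def Z_def by auto
    show "inj_on (\<lambda>u. d / u) Zs" using d unfolding Zs_def by (auto intro!: inj_onI simp: field_simps)
  qed simp
  have stepB: "abs_trace m (d / u) = abs_trace m u" for u
  proof (cases "u = 0")
    case True then show ?thesis by simp
  next
    case False
    show ?thesis
    proof (cases "abs_trace m u = 0")
      case True then show ?thesis using stepA unfolding Z_def by simp
    next
      case nz: False
      have "abs_trace m (d / u) \<noteq> 0"
      proof
        assume "abs_trace m (d / u) = 0"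
        hence "d / u \<in> Zs" using d False unfolding Zs_def Z_def by simp
        then obtain v where v: "v \<in> Zs" "d / u = d / v" using im by blast
        hence "u = v" using d False unfolding Zs_def by (auto simp: field_simps)
        thus False using v nz unfolding Zs_def Z_def by simp
      qed
      then show ?thesis using nz trace01[OF two xq] by metis
    qed
  qed
  define P :: "'a poly" where "P = (\<Sum>i<m. monom 1 (2^i)) + (\<Sum>i<m. monom (d^(2^i)) (2^m - 1 - 2^i))"
  have pe: "poly P u = 0" for u
  proof -
    have "poly P u = abs_trace m u + (\<Sum>i<m. d^(2^i) * u ^ (2^m - 1 - 2^i))"
      by (simp add: P_def poly_sum poly_monom abs_trace_def)
    also have "(\<Sum>i<m. d^(2^i) * u ^ (2^m - 1 - 2^i)) = abs_trace m (d / u)"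
      unfolding abs_trace_def
    proof (intro sum.cong refl)
      fix i assume "i \<in> {..<m}"
      then show "d^(2^i) * u ^ (2^m - 1 - 2^i) = (d / u) ^ 2 ^ i"
        using powinv[OF card m, of i u] by (simp add: divide_inverse power_mult_distrib)
    qed
    finally show ?thesis using stepB add_self[OF two] by simp
  qed
  have c: "coeff P k = (\<Sum>i<m. if 2^i = k then 1 else 0) + (\<Sum>i<m. if 2^m - 1 - 2^i = k then d^(2^i) else 0)" for k
    by (simp add: P_def coeff_sum)
  have "coeff P (2^m - 2) = 0 + (\<Sum>i<m. if i = 0 then d^(2^i) else 0)"
    unfolding c
  proof (intro arg_cong2[where f="(+)"])
    show "(\<Sum>i<m. if (2::nat)^i = 2^m - 2 then 1 else 0) = (0::'a)"
    proof (intro sum.neutral ballI)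
      fix i assume "i \<in> {..<m}"
      then have "i < m" by simp
      from pow_facts[OF m this] have "(2::nat)^i \<noteq> 2^m - 2" by linarith
      then show "(if (2::nat)^i = 2^m - 2 then 1 else 0) = (0::'a)" by simp
    qed
    show "(\<Sum>i<m. if (2::nat)^m - 1 - 2^i = 2^m - 2 then d^(2^i) else 0) = (\<Sum>i<m. if i = 0 then d^(2^i) else 0)"
    proof (intro sum.cong refl)
      fix i assume "i \<in> {..<m}"
      then have "i < m" by simp
      from pow_facts[OF m this] have "((2::nat)^m - 1 - 2^i = 2^m - 2) = ((2::nat)^i = 1)" by linarith
      then show "(if (2::nat)^m - 1 - 2^i = 2^m - 2 then d^(2^i) else 0) = (if i = 0 then d^(2^i) else 0)" by simp
    qed
  qed
  also have "\<dots> = d" using m by simp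
  finally have "P \<noteq> 0" using d by auto
  moreover have "degree P \<le> 2^m - 2"
  proof (rule degree_le, intro allI impI)
    fix k :: nat assume k: "2^m - 2 < k"
    have "(\<Sum>i<m. if (2::nat)^i = k then 1 else 0) = (0::'a)"
    proof (intro sum.neutral ballI)
      fix i assume "i \<in> {..<m}"
      then have "i < m" by simp
      from pow_facts[OF m this] have "(2::nat)^i \<noteq> k" using k by linarith
      then show "(if (2::nat)^i = k then 1 else 0) = (0::'a)" by simp
    qed
    moreover have "(\<Sum>i<m. if (2::nat)^m - 1 - 2^i = k then d^(2^i) else 0) = 0"
    proof (intro sum.neutral ballI)
      fix i assume "i \<in> {..<m}"
      then have "i < m" by simp
      from pow_facts[OF m this] have "(2::nat)^m - 1 - 2^i \<noteq> k" using k by linarith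
      then show "(if (2::nat)^m - 1 - 2^i = k then d^(2^i) else 0) = 0" by simp
    qed
    ultimately show "coeff P k = 0" unfolding c by simp
  qed
  ultimately have "card {u. poly P u = 0} \<le> 2^m - 2" using card_poly_roots_bound[of P] by simp
  moreover have "{u. poly P u = 0} = UNIV" using pe by auto
  moreover have "(0::nat) < 2^m" by simp
  ultimately show False using card by simp
qed

lemma add_self3: "(2::'a::field) = 0 \<Longrightarrow> (y::'a) + x + x = y"
  by (metis add.assoc add_self add_0_right)

lemma add_eq0: "(2::'a::field) = 0 \<Longrightarrow> ((x::'a) + y = 0) = (x = y)"
  by (metis add_self add_right_cancel)

lemma d2_lemma:
  fixes x a b :: "'a::field"
  assumes two: "(2::'a) = 0" and nz: "x \<noteq> 0" "x + a \<noteq> 0" "x + b \<noteq> 0" "x + a + b \<noteq> 0" "a \<noteq> 0"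
    and eq: "inverse x + inverse (x + a) + inverse (x + b) + inverse (x + a + b) = 0"
  shows "b * (a + b) = 0"
proof -
  have e1: "inverse x + inverse (x + a) = (x + a + x) / (x * (x + a))"
    using nz by (simp add: field_simps)
  have e2: "inverse (x + b) + inverse (x + a + b) = ((x + a + b) + (x + b)) / ((x + b) * (x + a + b))"
    using nz by (simp add: field_simps)
  have f1: "x + a + x = a" using two by (simp add: algebra_simps add_self2)
  have f2: "(x + a + b) + (x + b) = a" using two by (simp add: algebra_simps add_self2 add_self)
  have "(inverse x + inverse (x + a)) + (inverse (x + b) + inverse (x + a + b)) = 0"
    using eq by (simp only: add.assoc)
  hence "a / (x * (x + a)) + a / ((x + b) * (x + a + b)) = 0"
    unfolding e1 e2 f1 f2 .
  hence "a / (x * (x + a)) = a / ((x + b) * (x + a + b))" using add_eq0[OF two] by blast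
  hence g: "x * (x + a) = (x + b) * (x + a + b)" using nz by (simp add: field_simps)
  have "(x + b) * (x + a + b) = x * (x + a) + b * (a + b) + 2 * (x * b)" by (simp add: algebra_simps)
  thus ?thesis using g two by simp
qed


theorem lemma3p9:
  fixes m :: nat and a1 a2 b1 b2 :: "'a::{field,finite}"
  assumes "card (UNIV :: 'a set) = 2 ^ m" and "m \<ge> 4"
  shows "(\<forall>x::'a.
            inv_perm m x + inv_perm m (x + a2) + inv_perm m (x + b2) + inv_perm m (x + a2 + b2) = 0 \<and>
            abs_trace m (a1 * inv_perm m (x + a2) + b1 * inv_perm m (x + b2)
                         + (a1 + b1) * inv_perm m (x + a2 + b2)) = 0)
         \<longleftrightarrow> ((a1, a2) = (0, 0) \<or> (b1, b2) = (0, 0) \<or> (a1, a2) = (b1, b2) \<or> (a2 = 0 \<and> b2 = 0))"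
proof -
  note card = assms(1)
  have m3: "m \<ge> 3" and m2: "m \<ge> 2" and m1: "m \<ge> 1" using assms(2) by auto
  have two: "(2::'a) = 0" using char2 card m1 .
  have inv: "inv_perm m x = inverse x" for x :: 'a using inv_perm_eq[OF card m2] .
  note ss = add_self[OF two] add_self2[OF two] add_self3[OF two]
  show ?thesis unfolding inv
  proof
    assume H: "\<forall>x::'a. inverse x + inverse (x + a2) + inverse (x + b2) + inverse (x + a2 + b2) = 0 \<and>
            abs_trace m (a1 * inverse (x + a2) + b1 * inverse (x + b2) + (a1 + b1) * inverse (x + a2 + b2)) = 0"
    have part1: "a2 = 0 \<or> b2 = 0 \<or> a2 = b2"
    proof (rule ccontr)
      assume "\<not> (a2 = 0 \<or> b2 = 0 \<or> a2 = b2)"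
      hence a: "a2 \<noteq> 0" "b2 \<noteq> 0" "a2 \<noteq> b2" by auto
      have "card {0, a2, b2, a2 + b2} \<le> 4" by (simp add: card_insert_if)
      moreover have "(16::nat) \<le> 2^m"
        using power_increasing[OF assms(2), of "2::nat"] by simp
      ultimately have "{0, a2, b2, a2 + b2} \<noteq> (UNIV :: 'a set)" using card by auto
      then obtain x :: 'a where x: "x \<notin> {0, a2, b2, a2 + b2}" by blast
      have nz: "x \<noteq> 0" "x + a2 \<noteq> 0" "x + b2 \<noteq> 0" "x + a2 + b2 \<noteq> 0"
        using x add_eq0[OF two] by (auto simp: add.assoc)
      have "b2 * (a2 + b2) = 0" using d2_lemma[OF two nz a(1)] H by blast
      hence "a2 + b2 = 0" using a by simp
      thus False using a add_eq0[OF two] by blast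
    qed
    have T: "\<And>x. abs_trace m (a1 * inverse (x + a2) + b1 * inverse (x + b2) + (a1 + b1) * inverse (x + a2 + b2)) = 0"
      using H by blast
    show "(a1, a2) = (0, 0) \<or> (b1, b2) = (0, 0) \<or> (a1, a2) = (b1, b2) \<or> (a2 = 0 \<and> b2 = 0)"
    proof (cases "a2 = 0 \<and> b2 = 0")
      case True then show ?thesis by simp
    next
      case nb: False
      show ?thesis
      proof (cases "a2 = 0")
        case True
        hence b: "b2 \<noteq> 0" using nb by simp
        have "\<forall>x. abs_trace m (a1 * (inverse x + inverse (x + b2))) = 0"
        proof
          fix x
          have "a1 * inverse x + b1 * inverse (x + b2) + (a1 + b1) * inverse (x + b2) = a1 * (inverse x + inverse (x + b2))"
            by (simp add: algebra_simps ss)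
          then show "abs_trace m (a1 * (inverse x + inverse (x + b2))) = 0" using T[of x] True by simp
        qed
        hence "a1 = 0" using key[OF card m3 b] by blast
        then show ?thesis using True by simp
      next
        case a: False
        show ?thesis
        proof (cases "b2 = 0")
          case True
          have "\<forall>x. abs_trace m (b1 * (inverse x + inverse (x + a2))) = 0"
          proof
            fix x
            have "a1 * inverse (x + a2) + b1 * inverse x + (a1 + b1) * inverse (x + a2) = b1 * (inverse x + inverse (x + a2))"
              by (simp add: algebra_simps ss)
            then show "abs_trace m (b1 * (inverse x + inverse (x + a2))) = 0" using T[of x] True by simp
          qed
          hence "b1 = 0" using key[OF card m3 a] by blast
          then show ?thesis using True by simp
        next
          case False
          hence ab: "a2 = b2" using part1 a by simp
          have "\<forall>x. abs_trace m ((a1 + b1) * (inverse x + inverse (x + a2))) = 0"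
          proof
            fix x
            have "a1 * inverse (x + a2) + b1 * inverse (x + a2) + (a1 + b1) * inverse x = (a1 + b1) * (inverse x + inverse (x + a2))"
              by (simp add: algebra_simps ss)
            moreover have "x + a2 + a2 = x" using ss by simp
            ultimately show "abs_trace m ((a1 + b1) * (inverse x + inverse (x + a2))) = 0" using T[of x] ab two by simp
          qed
          hence "a1 + b1 = 0" using key[OF card m3 a] by blast
          hence "a1 = b1" using add_eq0[OF two] by blast
          then show ?thesis using ab by simp
        qed
      qed
    qed
  next
    assume C: "(a1, a2) = (0, 0) \<or> (b1, b2) = (0, 0) \<or> (a1, a2) = (b1, b2) \<or> (a2 = 0 \<and> b2 = 0)"
    show "\<forall>x::'a. inverse x + inverse (x + a2) + inverse (x + b2) + inverse (x + a2 + b2) = 0 \<and>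
            abs_trace m (a1 * inverse (x + a2) + b1 * inverse (x + b2) + (a1 + b1) * inverse (x + a2 + b2)) = 0"
    proof
      fix x :: 'a
      from C show "inverse x + inverse (x + a2) + inverse (x + b2) + inverse (x + a2 + b2) = 0 \<and>
            abs_trace m (a1 * inverse (x + a2) + b1 * inverse (x + b2) + (a1 + b1) * inverse (x + a2 + b2)) = 0"
      proof (elim disjE)
        assume "(a1, a2) = (0, 0)"
        then show ?thesis by (simp add: ss trace_zero algebra_simps)
      next
        assume "(b1, b2) = (0, 0)"
        then show ?thesis by (simp add: ss trace_zero algebra_simps)
      next
        assume "(a1, a2) = (b1, b2)"
        then show ?thesis by (simp add: ss trace_zero algebra_simps)
      next
        assume "a2 = 0 \<and> b2 = 0"
        then show ?thesis by (simp add: ss trace_zero algebra_simps)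
      qed
    qed
  qed
qed

end
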